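(* For every integer $n\geq 3$, there is a partition of $\mathbb{R}^n$ into $2^{\aleph_0}$ pairwise disjoint subsets, each of which is arcwise connected and dense in $\mathbb{R}^n$.
   Context: $\mathbb{R}^n$ carries its usual Euclidean topology. *)

theory Defs
  imports "HOL-Analysis.Analysis" "HOL-Library.Equipollence"
begin

definition arcwise_connected :: "'a::topological_space set \<Rightarrow> bool" where
  "arcwise_connected S \<longleftrightarrow>
     (\<forall>x\<in>S. \<forall>y\<in>S. x \<noteq> y \<longrightarrow>
        (\<exists>g. arc g \<and> path_image g \<subseteq> S \<and> pathstart g = x \<and> pathfinish g = y))"

end

theory Submission
  imports Defs
begin

definition fd :: "real \<Rightarrow> real \<Rightarrow> real" where
  "fd a x = (if \<exists>c\<in>\<rat>. x - c * a \<in> \<rat> then (THE c. c \<in> \<rat> \<and> x - c * a \<in> \<rat>) else 0)"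

lemma fd_eq:
  assumes a: "a \<notin> \<rat>" and c: "c \<in> \<rat>" and q: "q \<in> \<rat>"
  shows "fd a (q + c * a) = c"
proof -
  have uniq: "c' = c" if "c' \<in> \<rat>" "q + c * a - c' * a \<in> \<rat>" for c'
  proof (rule ccontr)
    assume ne: "c' \<noteq> c"
    have r: "(q + c * a - c' * a) - q \<in> \<rat>" by (rule Rats_diff[OF that(2) q])
    have "(q + c * a - c' * a) - q = (c - c') * a" by (simp add: algebra_simps)
    hence m: "(c - c') * a \<in> \<rat>" using r by simp
    have "((c - c') * a) / (c - c') \<in> \<rat>" by (rule Rats_divide[OF m Rats_diff[OF c that(1)]])
    moreover have "((c - c') * a) / (c - c') = a" using ne by simp
    ultimately show False using a by simp
  qed
  have ex: "c \<in> \<rat> \<and> q + c * a - c * a \<in> \<rat>" using c q by simp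
  have "(THE c'. c' \<in> \<rat> \<and> q + c * a - c' * a \<in> \<rat>) = c"
    by (rule the_equality) (use ex uniq in auto)
  thus ?thesis unfolding fd_def using ex by auto
qed

definition GG :: "real \<Rightarrow> 'n \<Rightarrow> 'n \<Rightarrow> 'n \<Rightarrow> real \<Rightarrow> (real^'n) set" where
  "GG a i j k t = {v. v$k = t + v$j * fd a (v$i)}"

lemma pc_seg:
  fixes x y :: "'a::real_normed_vector"
  assumes "closed_segment x y \<subseteq> S"
  shows "path_component S x y"
  unfolding path_component_def
  by (rule exI[of _ "linepath x y"]) (use assms in auto)

lemma seg1:
  assumes ij: "i \<noteq> j" and ik: "i \<noteq> k" and jk: "j \<noteq> k" and v: "v \<in> GG a i j k t"
  shows "closed_segment v (\<chi> l. if l = j then 0 else if l = k then t else v$l) \<subseteq> GG a i j k t"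
proof
  fix z assume "z \<in> closed_segment v (\<chi> l. if l = j then 0 else if l = k then t else v$l)"
  then obtain u where z: "z = (1 - u) *\<^sub>R v + u *\<^sub>R (\<chi> l. if l = j then 0 else if l = k then t else v$l)"
    unfolding closed_segment_def by auto
  have zi: "z$i = v$i" unfolding z using ij ik by (simp add: algebra_simps)
  have zj: "z$j = (1-u) * v$j" unfolding z by simp
  have zk: "z$k = (1-u) * v$k + u * t" unfolding z using jk by simp
  have vk: "v$k = t + v$j * fd a (v$i)" using v by (simp add: GG_def)
  have e1: "z$k = t + ((1-u) * v$j) * fd a (v$i)" unfolding zk vk by (simp add: algebra_simps)
  show "z \<in> GG a i j k t" unfolding GG_def by (simp only: mem_Collect_eq e1 zi zj)
qed

lemma seg2:
  assumes "x$j = 0" "x$k = t" "y$j = 0" "y$k = t"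
  shows "closed_segment x y \<subseteq> GG a i j k t"
proof
  fix z assume "z \<in> closed_segment x y"
  then obtain u where z: "z = (1 - u) *\<^sub>R x + u *\<^sub>R y" unfolding closed_segment_def by auto
  have "z$j = 0" "z$k = t" unfolding z using assms by (simp_all add: algebra_simps)
  thus "z \<in> GG a i j k t" unfolding GG_def by simp
qed

lemma GG_pc:
  assumes ij: "i \<noteq> j" and ik: "i \<noteq> k" and jk: "j \<noteq> k"
  shows "path_connected (GG a i j k t)"
  unfolding path_connected_component
proof (intro ballI)
  fix v w assume v: "v \<in> GG a i j k t" and w: "w \<in> GG a i j k t"
  define v' where "v' = (\<chi> l. if l = j then 0 else if l = k then t else v$l)"
  define w' where "w' = (\<chi> l. if l = j then 0 else if l = k then t else w$l)"
  have 1: "path_component (GG a i j k t) v v'"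
    unfolding v'_def by (rule pc_seg, rule seg1[OF assms v])
  have 3: "path_component (GG a i j k t) w w'"
    unfolding w'_def by (rule pc_seg, rule seg1[OF assms w])
  have 2: "path_component (GG a i j k t) v' w'"
    by (rule pc_seg, rule seg2) (use jk in \<open>simp_all add: v'_def w'_def\<close>)
  show "path_component (GG a i j k t) v w"
    using 1 2 3 path_component_trans path_component_sym by metis
qed

lemma GG_dense:
  assumes ij: "i \<noteq> j" and ik: "i \<noteq> k" and jk: "j \<noteq> k" and a: "a \<notin> \<rat>"
  shows "closure (GG a i j k t) = UNIV"
proof -
  have "p \<in> closure (GG a i j k t)" for p
    unfolding closure_approachable
  proof (intro allI impI)
    fix e :: real assume e: "e > 0"
    define y0 where "y0 = (if p$j = 0 then e/4 else p$j)"
    have y0: "y0 \<noteq> 0" "\<bar>y0 - p$j\<bar> < e/3" using e by (auto simp: y0_def)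
    define c0 where "c0 = (p$k - t) / y0"
    have "c0 - e/(4*\<bar>y0\<bar>) < c0 + e/(4*\<bar>y0\<bar>)" using e y0 by simp
    then obtain c where c: "c \<in> \<rat>" "c0 - e/(4*\<bar>y0\<bar>) < c" "c < c0 + e/(4*\<bar>y0\<bar>)"
      using Rats_dense_in_real by blast
    have "\<bar>c - c0\<bar> < e/(4*\<bar>y0\<bar>)" using c by auto
    hence "\<bar>y0\<bar> * \<bar>c - c0\<bar> < \<bar>y0\<bar> * (e/(4*\<bar>y0\<bar>))"
      by (rule mult_strict_left_mono) (use y0 in auto)
    also have "\<dots> = e/4" using y0 by simp
    finally have lt: "\<bar>y0 * (c - c0)\<bar> < e/4" by (simp add: abs_mult)
    have "y0 * c - (p$k - t) = y0 * (c - c0)" using y0 by (simp add: c0_def field_simps)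
    hence "\<bar>y0 * c - (p$k - t)\<bar> < e/4" using lt by simp
    moreover have "\<bar>t + y0 * c - p$k\<bar> = \<bar>y0 * c - (p$k - t)\<bar>" by (simp add: algebra_simps)
    ultimately have cz: "\<bar>t + y0 * c - p$k\<bar> < e/3" using e by linarith
    have "p$i - c*a - e/4 < p$i - c*a + e/4" using e by simp
    then obtain q where q: "q \<in> \<rat>" "p$i - c*a - e/4 < q" "q < p$i - c*a + e/4"
      using Rats_dense_in_real by blast
    define x where "x = q + c * a"
    have xi: "\<bar>x - p$i\<bar> < e/3" using q e unfolding x_def abs_less_iff by linarith
    have fx: "fd a x = c" unfolding x_def by (rule fd_eq[OF a c(1) q(1)])
    define v where "v = p + (x - p$i) *\<^sub>R axis i 1 + (y0 - p$j) *\<^sub>R axis j 1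
                          + (t + y0 * c - p$k) *\<^sub>R axis k (1::real)"
    have vi: "v$i = x" and vj: "v$j = y0" and vk: "v$k = t + y0 * c"
      using ij ik jk by (auto simp: v_def axis_def)
    have "v \<in> GG a i j k t" unfolding GG_def using vi vj vk fx by simp
    moreover have "dist v p < e"
    proof -
      have "dist v p = norm ((x - p$i) *\<^sub>R axis i 1 + (y0 - p$j) *\<^sub>R axis j 1
                          + (t + y0 * c - p$k) *\<^sub>R axis k (1::real))"
        by (simp add: dist_norm v_def add.assoc)
      also have "\<dots> \<le> norm ((x - p$i) *\<^sub>R axis i (1::real)) + norm ((y0 - p$j) *\<^sub>R axis j (1::real))
                          + norm ((t + y0 * c - p$k) *\<^sub>R axis k (1::real))"
        by (meson add_mono norm_triangle_ineq order_trans order_refl)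
      also have "\<dots> = \<bar>x - p$i\<bar> + \<bar>y0 - p$j\<bar> + \<bar>t + y0 * c - p$k\<bar>" by simp
      also have "\<dots> < e" using xi y0(2) cz by simp
      finally show ?thesis .
    qed
    ultimately show "\<exists>y\<in>GG a i j k t. dist y p < e" by blast
  qed
  thus ?thesis by auto
qed

theorem corollary1:
  assumes "CARD('n::finite) \<ge> 3"
  shows "\<exists>P :: (real ^ 'n) set set.
           \<Union>P = UNIV \<and>
           (\<forall>A\<in>P. \<forall>B\<in>P. A \<noteq> B \<longrightarrow> A \<inter> B = {}) \<and>
           (\<forall>A\<in>P. A \<noteq> {}) \<and>
           P \<approx> (UNIV :: real set) \<and>
           (\<forall>A\<in>P. arcwise_connected A \<and> closure A = UNIV)"
proof -
  obtain S :: "'n set" where "card S = 3"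
    using ex_card[of 3 "UNIV :: 'n set"] assms by auto
  then obtain i j k :: 'n where ij: "i \<noteq> j" and ik: "i \<noteq> k" and jk: "j \<noteq> k"
    unfolding card_3_iff by blast
  obtain a :: real where a: "a \<notin> \<rat>"
    using countable_rat uncountable_UNIV_real by (metis UNIV_I countable_subset subsetI)
  define G where "G = (\<lambda>t. GG a i j k t)"
  define P where "P = range G"
  have mem: "v \<in> G t \<longleftrightarrow> t = v$k - v$j * fd a (v$i)" for v t
    by (auto simp: G_def GG_def)
  have inj: "inj G"
  proof (rule injI)
    fix s t assume "G s = G t"
    moreover have "(\<chi> l. if l = k then s else 0) \<in> G s" using mem jk ik
      by simp
    ultimately have "(\<chi> l. if l = k then s else 0) \<in> G t" by simp
    thus "s = t" using mem jk ik by simp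
  qed
  have wit: "x \<in> G (x$k - x$j * fd a (x$i))" for x by (simp add: mem)
  have "\<Union>P = UNIV" unfolding P_def using wit by blast
  moreover have "\<forall>A\<in>P. \<forall>B\<in>P. A \<noteq> B \<longrightarrow> A \<inter> B = {}"
    unfolding P_def by (auto simp: mem)
  moreover have "\<forall>A\<in>P. A \<noteq> {}"
  proof
    fix A assume "A \<in> P"
    then obtain s where "A = G s" unfolding P_def by blast
    moreover have "(\<chi> l. if l = k then s else 0) \<in> G s" using mem jk ik by simp
    ultimately show "A \<noteq> {}" by blast
  qed
  moreover have "P \<approx> (UNIV :: real set)" unfolding P_def using inj inj_on_image_eqpoll_self by blast
  moreover have "\<forall>A\<in>P. arcwise_connected A \<and> closure A = UNIV"
    unfolding P_def G_def arcwise_connected_def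
    using GG_pc[OF ij ik jk] GG_dense[OF ij ik jk a] path_connected_arcwise by blast
  ultimately show ?thesis by blast
qed

end
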